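(* Let $n\ge 1$ and let $x_1,\dots,x_n$ be distinct integers, each greater than $1$, and let $D=\{1,x_1,\dots,x_n\}$. Then $diam(D)=2$ if $n=1$, $diam(D)=3$ if $n=2$, and $diam(D)=4$ if $n>2$.
   Context: A signed tree is a pair $(T,s)$ where $T$ is a finite tree and $s:E(T)\to\{+,-\}$. The signed degree $sdeg(v)$ of a vertex is the number of incident positive edges minus the number of incident negative edges. $(T,s)$ realizes (satisfies) a set $D$ of integers if $D=\{sdeg(v):v\in V(T)\}$. For a set $D$ containing $1$ or $-1$, $diam(D)=\min\{diam(T): \text{some signed tree }(T,s)\text{ realizes }D\}$, where $diam(T)$ is the diameter of the tree $T$. *)

theory Defs
  imports Main
begin

definition simple_graph :: "nat set \<Rightarrow> nat set set \<Rightarrow> bool" where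
  "simple_graph V E \<longleftrightarrow> finite V \<and>
     (\<forall>e\<in>E. \<exists>u v. e = {u, v} \<and> u \<noteq> v \<and> u \<in> V \<and> v \<in> V)"

definition is_walk :: "nat set set \<Rightarrow> nat list \<Rightarrow> bool" where
  "is_walk E xs \<longleftrightarrow> xs \<noteq> [] \<and> (\<forall>i. Suc i < length xs \<longrightarrow> {xs ! i, xs ! Suc i} \<in> E)"

definition connected_graph :: "nat set \<Rightarrow> nat set set \<Rightarrow> bool" where
  "connected_graph V E \<longleftrightarrow>
     (\<forall>u\<in>V. \<forall>v\<in>V. \<exists>xs. is_walk E xs \<and> hd xs = u \<and> last xs = v)"

definition has_cycle :: "nat set set \<Rightarrow> bool" where
  "has_cycle E \<longleftrightarrow> (\<exists>xs. length xs \<ge> 3 \<and> distinct xs \<and> is_walk E xs \<and> {last xs, hd xs} \<in> E)"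

definition is_tree :: "nat set \<Rightarrow> nat set set \<Rightarrow> bool" where
  "is_tree V E \<longleftrightarrow> simple_graph V E \<and> V \<noteq> {} \<and> connected_graph V E \<and> \<not> has_cycle E"

definition gdist :: "nat set set \<Rightarrow> nat \<Rightarrow> nat \<Rightarrow> nat" where
  "gdist E u v = (LEAST k. \<exists>xs. is_walk E xs \<and> hd xs = u \<and> last xs = v \<and> length xs = Suc k)"

definition tree_diam :: "nat set \<Rightarrow> nat set set \<Rightarrow> nat" where
  "tree_diam V E = Max {gdist E u v | u v. u \<in> V \<and> v \<in> V}"

(* signing s: True = positive edge, False = negative edge (only values on E matter) *)
definition sdeg :: "nat set set \<Rightarrow> (nat set \<Rightarrow> bool) \<Rightarrow> nat \<Rightarrow> int" where
  "sdeg E s v = int (card {e\<in>E. v \<in> e \<and> s e}) - int (card {e\<in>E. v \<in> e \<and> \<not> s e})"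

definition realizes :: "nat set \<Rightarrow> nat set set \<Rightarrow> (nat set \<Rightarrow> bool) \<Rightarrow> int set \<Rightarrow> bool" where
  "realizes V E s D \<longleftrightarrow> D = sdeg E s ` V"

definition diamD :: "int set \<Rightarrow> nat" where
  "diamD D = (LEAST d. \<exists>V E s. is_tree V E \<and> realizes V E s D \<and> tree_diam V E = d)"

end

theory Submission
  imports Defs "HOL-Library.Nat_Bijection"
begin

fun es :: "nat list \<Rightarrow> nat set set" where
  "es (x # y # r) = insert {x, y} (es (y # r))"
| "es _ = {}"

lemma es_nth: "es xs = {{xs ! i, xs ! Suc i} | i. Suc i < length xs}"
proof (induction xs rule: es.induct)
  case (1 x y r)
  have "{{(x # y # r) ! i, (x # y # r) ! Suc i} | i. Suc i < length (x # y # r)}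
        = insert {x, y} {{(y # r) ! i, (y # r) ! Suc i} | i. Suc i < length (y # r)}"
    (is "?L = ?R")
  proof
    show "?L \<subseteq> ?R"
    proof
      fix e assume "e \<in> ?L"
      then obtain i where i: "e = {(x # y # r) ! i, (x # y # r) ! Suc i}" "Suc i < length (x # y # r)" by blast
      show "e \<in> ?R"
      proof (cases i)
        case 0 then show ?thesis using i by simp
      next
        case (Suc j) then show ?thesis using i by auto
      qed
    qed
  next
    show "?R \<subseteq> ?L"
    proof
      fix e assume "e \<in> ?R"
      then consider "e = {x, y}" | j where "e = {(y # r) ! j, (y # r) ! Suc j}" "Suc j < length (y # r)" by blast
      then show "e \<in> ?L"
      proof cases
        case 1 then show ?thesis by (rule_tac CollectI, rule_tac x=0 in exI) simp
      next
        case 2 then show ?thesis by (rule_tac CollectI, rule_tac x="Suc j" in exI) simp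
      qed
    qed
  qed
  then show ?case using 1 by simp
next
  case "2_1" then show ?case by simp
next
  case ("2_2" v) then show ?case by simp
qed

lemma walk_es: "is_walk E xs \<longleftrightarrow> xs \<noteq> [] \<and> es xs \<subseteq> E"
  unfolding is_walk_def es_nth by blast

lemma es_append: "es (xs @ y # ys) = es (xs @ [y]) \<union> es (y # ys)"
proof (induction xs)
  case Nil then show ?case by simp
next
  case (Cons a xs)
  then show ?case by (cases xs) auto
qed

lemma es_join:
  assumes "xs \<noteq> []" "ys \<noteq> []" "last xs = hd ys"
  shows "es (xs @ tl ys) = es xs \<union> es ys"
proof -
  obtain xs' y where x: "xs = xs' @ [y]" using assms(1) by (metis append_butlast_last_id)
  obtain ys' where y: "ys = y # ys'" using assms by (cases ys) (auto simp: x)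
  show ?thesis using es_append[of xs' y ys'] by (simp add: x y)
qed

lemma join_hd: "xs \<noteq> [] \<Longrightarrow> hd (xs @ tl ys) = hd xs" by simp
lemma join_last: "xs \<noteq> [] \<Longrightarrow> ys \<noteq> [] \<Longrightarrow> last xs = hd ys \<Longrightarrow> last (xs @ tl ys) = last ys"
  by (cases ys) auto
lemma join_ne: "xs \<noteq> [] \<Longrightarrow> xs @ tl ys \<noteq> []" by simp

lemma es_rev: "es (rev xs) = es xs"
proof (induction xs rule: es.induct)
  case (1 x y r)
  have "rev (x # y # r) = rev (y # r) @ tl [y, x]" by simp
  then have "es (rev (x # y # r)) = es (rev (y # r)) \<union> es [y, x]"
    using es_join[of "rev (y # r)" "[y, x]"] by (simp add: last_rev)
  then show ?case using 1 by (auto simp: insert_commute)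
qed auto

lemma es_subset: "e \<in> es xs \<Longrightarrow> e \<subseteq> set xs"
  by (induction xs rule: es.induct) auto

lemma finite_es: "finite (es xs)"
  by (induction xs rule: es.induct) auto

lemma card_es_le: "card (es xs) \<le> length xs - 1"
proof (induction xs rule: es.induct)
  case (1 x y r)
  then show ?case using card_insert_le_m1 by (simp add: card_insert_if finite_es)
qed auto

lemma card_es_distinct: "distinct xs \<Longrightarrow> card (es xs) = length xs - 1"
proof (induction xs rule: es.induct)
  case (1 x y r)
  have "{x, y} \<notin> es (y # r)" using es_subset 1(2) by fastforce
  then show ?case using 1 by (simp add: finite_es)
qed auto

lemma es_decomp: "e \<in> es xs \<Longrightarrow> \<exists>A B p q. xs = A @ p # q # B \<and> e = {p, q}"
proof (induction xs rule: es.induct)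
  case (1 x y r)
  show ?case
  proof (cases "e = {x, y}")
    case True then show ?thesis by (rule_tac x="[]" in exI) auto
  next
    case False
    then obtain A B p q where "y # r = A @ p # q # B" "e = {p, q}" using 1 by auto
    then show ?thesis by (rule_tac x="x # A" in exI) auto
  qed
qed auto

lemma distinct_reduce:
  "xs \<noteq> [] \<Longrightarrow> \<exists>ys. ys \<noteq> [] \<and> distinct ys \<and> hd ys = hd xs \<and> last ys = last xs \<and> es ys \<subseteq> es xs"
proof (induction "length xs" arbitrary: xs rule: less_induct)
  case less
  show ?case
  proof (cases "distinct xs")
    case True then show ?thesis using less by blast
  next
    case False
    then obtain a y b c where xs: "xs = a @ [y] @ b @ [y] @ c" using not_distinct_decomp by blast
    let ?xs = "a @ y # c"
    have "length ?xs < length xs" using xs by simp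
    then obtain ys where ys: "ys \<noteq> [] \<and> distinct ys \<and> hd ys = hd ?xs \<and> last ys = last ?xs \<and> es ys \<subseteq> es ?xs"
      using less(1)[of ?xs] by auto
    have e1: "es ?xs = es (a @ [y]) \<union> es (y # c)" by (rule es_append)
    have "es xs = es (a @ [y]) \<union> es (y # b @ y # c)" using es_append[of a y "b @ y # c"] xs by simp
    moreover have "es (y # b @ y # c) = es (y # b @ [y]) \<union> es (y # c)" using es_append[of "y # b" y c] by simp
    ultimately have "es ?xs \<subseteq> es xs" using e1 by blast
    moreover have "hd ?xs = hd xs" using xs by (cases a) auto
    moreover have "last ?xs = last xs" using xs by (cases c) auto
    ultimately show ?thesis using ys by auto
  qed
qed



lemma bridge:
  assumes nc: "\<not> has_cycle E" and e: "{p, q} \<in> E" and pq: "p \<noteq> q"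
    and ws: "ws \<noteq> []" "hd ws = p" "last ws = q" "es ws \<subseteq> E - {{p, q}}"
  shows False
proof -
  obtain ys where ys: "ys \<noteq> []" "distinct ys" "hd ys = p" "last ys = q" "es ys \<subseteq> E - {{p, q}}"
    using distinct_reduce[OF ws(1)] ws by blast
  have "length ys \<noteq> 1"
  proof
    assume "length ys = 1"
    then obtain z where "ys = [z]" by (cases ys; cases "tl ys") auto
    then show False using ys pq by simp
  qed
  moreover have "length ys \<noteq> 2"
  proof
    assume "length ys = 2"
    then obtain a b where "ys = [a, b]"
      by (cases ys; cases "tl ys"; cases "tl (tl ys)") auto
    then show False using ys by simp
  qed
  moreover have "length ys \<noteq> 0" using ys by simp
  ultimately have "length ys \<ge> 3" by linarith
  moreover have "is_walk E ys" using ys walk_es by blast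
  moreover have "{last ys, hd ys} \<in> E" using ys e by (simp add: insert_commute)
  ultimately have "has_cycle E" unfolding has_cycle_def using ys by blast
  then show False using nc by blast
qed

lemma geodesic_es:
  assumes nc: "\<not> has_cycle E" and P: "distinct P" "P \<noteq> []" "es P \<subseteq> E"
    and W: "W \<noteq> []" "es W \<subseteq> E" "hd W = hd P" "last W = last P"
  shows "es P \<subseteq> es W"
proof
  fix e assume eP: "e \<in> es P"
  then obtain A B p q where Pd: "P = A @ p # q # B" and e: "e = {p, q}" using es_decomp by blast
  show "e \<in> es W"
  proof (rule ccontr)
    assume ne: "e \<notin> es W"
    have pq: "p \<noteq> q" using P(1) Pd by auto
    have eE: "{p, q} \<in> E" using eP e P by auto
    define X where "X = rev (A @ [p])"
    define Y where "Y = rev (q # B)"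
    have esP: "es P = es (A @ [p]) \<union> es (p # q # B)" using Pd es_append[of A p "q # B"] by simp
    have esP2: "es (p # q # B) = insert {p,q} (es (q # B))" by simp
    have hX: "hd X = p" "last X = hd P" "X \<noteq> []" unfolding X_def Pd by (cases A) (simp_all add: hd_rev last_rev)
    have hY: "hd Y = last P" "last Y = q" "Y \<noteq> []" unfolding Y_def using Pd by (simp_all add: hd_rev last_rev)
    define Z where "Z = X @ tl W"
    have hZ: "Z \<noteq> []" "hd Z = p" "last Z = last P" "es Z = es X \<union> es W"
    proof -
      show "Z \<noteq> []" unfolding Z_def using hX by simp
      show "hd Z = p" unfolding Z_def using hX by simp
      show "last Z = last P" unfolding Z_def using join_last[of X W] hX W by simp
      show "es Z = es X \<union> es W" unfolding Z_def using es_join[of X W] hX W by simp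
    qed
    define C where "C = Z @ tl Y"
    have hC: "C \<noteq> []" "hd C = p" "last C = q" "es C = es Z \<union> es Y"
    proof -
      show "C \<noteq> []" unfolding C_def using hZ by simp
      show "hd C = p" unfolding C_def using hZ by simp
      show "last C = q" unfolding C_def using join_last[of Z Y] hZ hY by simp
      show "es C = es Z \<union> es Y" unfolding C_def using es_join[of Z Y] hZ hY by simp
    qed
    have "{p,q} \<notin> es (A @ [p])"
    proof
      assume "{p,q} \<in> es (A @ [p])"
      then have "q \<in> set (A @ [p])" using es_subset by blast
      then show False using P(1) Pd pq by auto
    qed
    moreover have "{p,q} \<notin> es (q # B)"
    proof
      assume "{p,q} \<in> es (q # B)"
      then have "p \<in> set (q # B)" using es_subset by blast
      then show False using P(1) Pd pq by auto
    qed
    moreover have "es X = es (A @ [p])" unfolding X_def by (rule es_rev)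
    moreover have "es Y = es (q # B)" unfolding Y_def by (rule es_rev)
    moreover have "es (A @ [p]) \<subseteq> E" "es (q # B) \<subseteq> E" using esP esP2 P(3) by auto
    ultimately have "es C \<subseteq> E - {{p,q}}"
      using hC(4) hZ(4) ne e W(2) by blast
    then show False using bridge[OF nc eE pq] hC by blast
  qed
qed

lemma geodesic_len:
  assumes nc: "\<not> has_cycle E" and P: "distinct P" "P \<noteq> []" "es P \<subseteq> E"
    and W: "W \<noteq> []" "es W \<subseteq> E" "hd W = hd P" "last W = last P"
  shows "length P \<le> length W"
proof -
  have "card (es P) \<le> card (es W)" using geodesic_es[OF assms] finite_es card_mono by blast
  moreover have "card (es P) = length P - 1" using card_es_distinct[OF P(1)] .
  moreover have "card (es W) \<le> length W - 1" using card_es_le[of W] .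
  moreover have "length P \<ge> 1" "length W \<ge> 1" using P W by (auto simp: Suc_le_eq)
  ultimately show ?thesis by linarith
qed

lemma gdist_real:
  assumes "is_walk E xs" "hd xs = u" "last xs = v"
  shows "\<exists>W. is_walk E W \<and> hd W = u \<and> last W = v \<and> length W = Suc (gdist E u v)"
proof -
  have ex: "\<exists>k. \<exists>W. is_walk E W \<and> hd W = u \<and> last W = v \<and> length W = Suc k"
    using assms by (rule_tac x="length xs - 1" in exI) (auto simp: is_walk_def)
  show ?thesis unfolding gdist_def by (rule LeastI_ex[OF ex])
qed

lemma gdist_le:
  assumes "is_walk E xs" "hd xs = u" "last xs = v"
  shows "gdist E u v \<le> length xs - 1"
  unfolding gdist_def
  by (rule Least_le) (use assms in \<open>auto simp: is_walk_def\<close>)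

lemma gdist_ge:
  assumes nc: "\<not> has_cycle E" and P: "distinct P" "P \<noteq> []" "es P \<subseteq> E"
  shows "length P - 1 \<le> gdist E (hd P) (last P)"
proof -
  have "is_walk E P" using P walk_es by blast
  then obtain W where W: "is_walk E W" "hd W = hd P" "last W = last P" "length W = Suc (gdist E (hd P) (last P))"
    using gdist_real by blast
  then have "length P \<le> length W" using geodesic_len[OF nc P] walk_es by blast
  then show ?thesis using W by simp
qed

lemma gdist_refl: "gdist E u u = 0"
  using gdist_le[of E "[u]" u u] by (simp add: is_walk_def)

lemma gdist_edge: "{u, v} \<in> E \<Longrightarrow> gdist E u v \<le> 1"
  using gdist_le[of E "[u, v]" u v] by (simp add: walk_es)

lemma gdist_sym_le:
  assumes "\<exists>xs. is_walk E xs \<and> hd xs = u \<and> last xs = v"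
  shows "gdist E v u \<le> gdist E u v"
proof -
  obtain W where W: "is_walk E W" "hd W = u" "last W = v" "length W = Suc (gdist E u v)"
    using assms gdist_real by blast
  have "is_walk E (rev W)" using W walk_es es_rev by (metis rev_is_Nil_conv)
  then have "gdist E v u \<le> length (rev W) - 1"
    using gdist_le[of E "rev W" v u] W by (simp add: hd_rev last_rev walk_es)
  then show ?thesis using W by simp
qed

lemma gdist_tri:
  assumes "\<exists>xs. is_walk E xs \<and> hd xs = u \<and> last xs = w"
    and "\<exists>xs. is_walk E xs \<and> hd xs = w \<and> last xs = v"
  shows "gdist E u v \<le> gdist E u w + gdist E w v"
proof -
  obtain W1 where W1: "is_walk E W1" "hd W1 = u" "last W1 = w" "length W1 = Suc (gdist E u w)"
    using assms gdist_real by blast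
  obtain W2 where W2: "is_walk E W2" "hd W2 = w" "last W2 = v" "length W2 = Suc (gdist E w v)"
    using assms gdist_real by blast
  have ne: "W1 \<noteq> []" "W2 \<noteq> []" using W1 W2 walk_es by auto
  have "is_walk E (W1 @ tl W2)" using es_join[of W1 W2] W1 W2 ne walk_es by auto
  then have "gdist E u v \<le> length (W1 @ tl W2) - 1"
    using gdist_le[of E "W1 @ tl W2" u v] W1 W2 ne join_last[of W1 W2] by simp
  then show ?thesis using W1 W2 ne by simp
qed



lemma edge_other:
  assumes "simple_graph V E" "e \<in> E" "w \<in> e"
  shows "\<exists>a. e = {w, a} \<and> a \<noteq> w \<and> a \<in> V \<and> w \<in> V"
  using assms unfolding simple_graph_def by (auto simp: insert_commute)

lemma card2_ex: "2 \<le> card A \<Longrightarrow> \<exists>x\<in>A. \<exists>y\<in>A. x \<noteq> y"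
proof -
  assume "2 \<le> card A"
  then obtain a B where "A = insert a B" "a \<notin> B" "1 \<le> card B" using card_le_Suc_iff[of 1 A] by auto
  then obtain b where "b \<in> B" by fastforce
  then have "a \<in> A" "b \<in> A" "a \<noteq> b" using \<open>A = insert a B\<close> \<open>a \<notin> B\<close> by auto
  then show ?thesis by blast
qed

lemma two_nbrs:
  assumes sg: "simple_graph V E" and d: "sdeg E s w \<ge> 2"
  shows "\<exists>a b. a \<noteq> b \<and> {w, a} \<in> E \<and> {w, b} \<in> E \<and> a \<noteq> w \<and> b \<noteq> w \<and> a \<in> V \<and> b \<in> V \<and> w \<in> V"
proof -
  have "2 \<le> card {e\<in>E. w \<in> e \<and> s e}" using d unfolding sdeg_def by linarith
  then obtain e1 e2 where e: "e1 \<in> {e\<in>E. w \<in> e \<and> s e}" "e2 \<in> {e\<in>E. w \<in> e \<and> s e}" "e1 \<noteq> e2"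
    using card2_ex by blast
  obtain a where a: "e1 = {w, a}" "a \<noteq> w" "a \<in> V" "w \<in> V" using edge_other[OF sg] e by blast
  obtain b where b: "e2 = {w, b}" "b \<noteq> w" "b \<in> V" using edge_other[OF sg] e by blast
  show ?thesis using a b e by (rule_tac x=a in exI, rule_tac x=b in exI) auto
qed

lemma es_take: "es (take k xs) \<subseteq> es xs"
  unfolding es_nth by auto

lemma ext_front:
  assumes nc: "\<not> has_cycle E" and P: "distinct P" "es P \<subseteq> E" "length P \<ge> 2"
    and a: "{a, hd P} \<in> E" "a \<noteq> hd P" "a \<noteq> P ! 1"
  shows "a \<notin> set P"
proof
  assume "a \<in> set P"
  then obtain j where j: "j < length P" "P ! j = a" by (metis in_set_conv_nth)
  have "j \<noteq> 0" using a j P by (metis hd_conv_nth list.size(3) not_numeral_le_zero)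
  moreover have "j \<noteq> 1" using a j by auto
  ultimately have j2: "j \<ge> 2" by linarith
  let ?C = "take (Suc j) P"
  have "length ?C \<ge> 3" using j j2 by simp
  moreover have "distinct ?C" using P by simp
  moreover have "is_walk E ?C" using walk_es es_take[of "Suc j" P] P j by force
  moreover have "last ?C = a" using j by (simp add: take_Suc_conv_app_nth)
  moreover have "hd ?C = hd P" using j by (cases P) auto
  ultimately have "has_cycle E" unfolding has_cycle_def using a(1) by (metis insert_commute)
  then show False using nc by blast
qed

lemma far:
  assumes T: "is_tree V E" and uv: "u \<noteq> v" "u \<in> V" "v \<in> V"
    and nu: "\<exists>a b. a \<noteq> b \<and> {u, a} \<in> E \<and> {u, b} \<in> E"
    and nv: "\<exists>a b. a \<noteq> b \<and> {v, a} \<in> E \<and> {v, b} \<in> E"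
  shows "\<exists>Q. distinct Q \<and> Q \<noteq> [] \<and> es Q \<subseteq> E \<and> hd Q \<in> V \<and> last Q \<in> V \<and> length Q \<ge> 4
            \<and> ({u, v} \<notin> E \<longrightarrow> length Q \<ge> 5)"
proof -
  have sg: "simple_graph V E" and nc: "\<not> has_cycle E" and con: "connected_graph V E"
    using T unfolding is_tree_def by auto
  obtain P where P: "distinct P" "P \<noteq> []" "es P \<subseteq> E" "hd P = u" "last P = v" "length P \<ge> 2"
    "{u, v} \<notin> E \<longrightarrow> length P \<ge> 3"
  proof (cases "{u, v} \<in> E")
    case True
    then show ?thesis using that[of "[u, v]"] uv by simp
  next
    case False
    obtain W where W: "is_walk E W" "hd W = u" "last W = v" using con uv unfolding connected_graph_def by blast
    obtain ys where ys: "ys \<noteq> []" "distinct ys" "hd ys = u" "last ys = v" "es ys \<subseteq> es W"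
      using distinct_reduce[of W] W walk_es by metis
    have esE: "es ys \<subseteq> E" using ys W walk_es by blast
    have "length ys \<noteq> 1"
    proof
      assume "length ys = 1"
      then obtain z where "ys = [z]" by (cases ys; cases "tl ys") auto
      then show False using ys uv by simp
    qed
    moreover have "length ys \<noteq> 2"
    proof
      assume "length ys = 2"
      then obtain a b where "ys = [a, b]" by (cases ys; cases "tl ys"; cases "tl (tl ys)") auto
      then show False using ys esE False by simp
    qed
    moreover have "length ys \<noteq> 0" using ys by simp
    ultimately have "length ys \<ge> 3" by linarith
    then show ?thesis using that[of ys] ys esE by simp
  qed
  have se: "\<And>x y. {x, y} \<in> E \<Longrightarrow> x \<noteq> y \<and> x \<in> V \<and> y \<in> V"
    using sg unfolding simple_graph_def by (metis doubleton_eq_iff)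
  obtain a where a: "{u, a} \<in> E" "a \<noteq> P ! 1" using nu by metis
  obtain b where b: "{v, b} \<in> E" "b \<noteq> rev P ! 1" using nv by metis
  have aP: "a \<notin> set P"
    using ext_front[OF nc P(1) P(3) P(6), of a] a se P(4) by (metis insert_commute)
  have rP: "distinct (rev P)" "es (rev P) \<subseteq> E" "length (rev P) \<ge> 2" "hd (rev P) = v"
    using P by (auto simp: es_rev hd_rev)
  have "b \<notin> set (rev P)"
    using ext_front[OF nc rP(1-3), of b] b se rP(4) by (metis insert_commute)
  then have bP: "b \<notin> set P" by simp
  obtain r where Pr: "P = u # r" using P by (cases P) auto
  have esaP: "es (a # P) = insert {a, u} (es P)" using Pr by simp
  have ab: "a \<noteq> b"
  proof
    assume "a = b"
    have "length (a # P) \<ge> 3" using P by simp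
    moreover have "distinct (a # P)" using P aP by simp
    moreover have "is_walk E (a # P)" using walk_es esaP P a by (auto simp: insert_commute)
    moreover have "{last (a # P), hd (a # P)} \<in> E" using P b \<open>a = b\<close> by simp
    ultimately have "has_cycle E" unfolding has_cycle_def by blast
    then show False using nc by blast
  qed
  define Q where "Q = (a # P) @ tl [v, b]"
  have esQ: "es Q = es (a # P) \<union> es [v, b]" unfolding Q_def using es_join[of "a # P" "[v, b]"] P by simp
  have "distinct Q" unfolding Q_def using P aP bP ab by simp
  moreover have "Q \<noteq> []" unfolding Q_def by simp
  moreover have "es Q \<subseteq> E" using esQ esaP P a b by (auto simp: insert_commute)
  moreover have "hd Q \<in> V" unfolding Q_def using a se by simp
  moreover have "last Q \<in> V" unfolding Q_def using b se by simp
  moreover have "length Q = length P + 2" unfolding Q_def by simp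
  ultimately show ?thesis using P by (rule_tac x=Q in exI) auto
qed

lemma diam_ge:
  assumes T: "is_tree V E" and Q: "distinct Q" "Q \<noteq> []" "es Q \<subseteq> E" "hd Q \<in> V" "last Q \<in> V"
  shows "length Q - 1 \<le> tree_diam V E"
proof -
  have sg: "simple_graph V E" and nc: "\<not> has_cycle E" using T unfolding is_tree_def by auto
  have fin: "finite {gdist E u v | u v. u \<in> V \<and> v \<in> V}"
  proof -
    have "{gdist E u v | u v. u \<in> V \<and> v \<in> V} = (\<lambda>(u, v). gdist E u v) ` (V \<times> V)" by auto
    then show ?thesis using sg unfolding simple_graph_def by simp
  qed
  have "gdist E (hd Q) (last Q) \<le> tree_diam V E"
    unfolding tree_diam_def by (rule Max_ge[OF fin]) (use Q in blast)
  then show ?thesis using gdist_ge[OF nc Q(1-3)] by linarith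
qed

lemma lower_bound:
  fixes n :: nat and x :: "nat \<Rightarrow> int" and D :: "int set"
  assumes T: "is_tree V E" and R: "realizes V E s D"
    and n: "n \<ge> 1" and inj: "inj_on x {1..n}" and gt: "\<forall>i\<in>{1..n}. x i > 1"
    and D: "D = insert 1 (x ` {1..n})"
  shows "(if n = 1 then 2 else if n = 2 then 3 else 4) \<le> tree_diam V E"
proof -
  have sg: "simple_graph V E" using T unfolding is_tree_def by auto
  have hasw: "\<And>i. i \<in> {1..n} \<Longrightarrow> \<exists>w\<in>V. sdeg E s w = x i"
    using R D unfolding realizes_def by (metis (no_types, lifting) image_iff insertCI)
  have nb: "\<And>i. i \<in> {1..n} \<Longrightarrow> \<exists>w\<in>V. sdeg E s w = x i \<and> (\<exists>a b. a \<noteq> b \<and> {w, a} \<in> E \<and> {w, b} \<in> E)"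
  proof -
    fix i assume i: "i \<in> {1..n}"
    then obtain w where w: "w \<in> V" "sdeg E s w = x i" using hasw by blast
    then have "sdeg E s w \<ge> 2" using gt i by fastforce
    then show "?thesis i" using two_nbrs[OF sg] w by blast
  qed
  have "1 \<in> {1..n}" using n by simp
  then obtain w1 where w1: "w1 \<in> V" "sdeg E s w1 = x 1" "\<exists>a b. a \<noteq> b \<and> {w1, a} \<in> E \<and> {w1, b} \<in> E"
    using nb by blast
  show ?thesis
  proof (cases "n = 1")
    case True
    obtain a b where ab: "a \<noteq> b" "{w1, a} \<in> E" "{w1, b} \<in> E" using w1 by blast
    have se: "\<And>x y. {x, y} \<in> E \<Longrightarrow> x \<noteq> y \<and> x \<in> V \<and> y \<in> V"
      using sg unfolding simple_graph_def by (metis doubleton_eq_iff)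
    have "length [a, w1, b] - 1 \<le> tree_diam V E"
      by (rule diam_ge[OF T]) (use ab se in \<open>auto simp: insert_commute\<close>)
    then show ?thesis using True by simp
  next
    case False
    then have n2: "n \<ge> 2" using n by simp
    obtain w2 where w2: "w2 \<in> V" "sdeg E s w2 = x 2" "\<exists>a b. a \<noteq> b \<and> {w2, a} \<in> E \<and> {w2, b} \<in> E"
      using nb[of 2] n2 by auto
    have "x 1 \<noteq> x 2" using inj n2 unfolding inj_on_def by force
    then have w12: "w1 \<noteq> w2" using w1 w2 by metis
    show ?thesis
    proof (cases "n = 2")
      case True
      obtain Q where Q: "distinct Q" "Q \<noteq> []" "es Q \<subseteq> E" "hd Q \<in> V" "last Q \<in> V" "length Q \<ge> 4"
        using far[OF T w12 w1(1) w2(1) w1(3) w2(3)] by blast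
      then show ?thesis using diam_ge[OF T Q(1-5)] True by simp
    next
      case False
      then have n3: "n \<ge> 3" using n2 by simp
      obtain w3 where w3: "w3 \<in> V" "sdeg E s w3 = x 3" "\<exists>a b. a \<noteq> b \<and> {w3, a} \<in> E \<and> {w3, b} \<in> E"
        using nb[of 3] n3 by auto
      have "x 1 \<noteq> x 3" "x 2 \<noteq> x 3" using inj n3 unfolding inj_on_def by force+
      then have w13: "w1 \<noteq> w3" "w2 \<noteq> w3" using w1 w2 w3 by metis+
      have "\<exists>u v. u \<noteq> v \<and> u \<in> V \<and> v \<in> V \<and> {u, v} \<notin> E \<and>
          (\<exists>a b. a \<noteq> b \<and> {u, a} \<in> E \<and> {u, b} \<in> E) \<and> (\<exists>a b. a \<noteq> b \<and> {v, a} \<in> E \<and> {v, b} \<in> E)"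
      proof (rule ccontr)
        assume "\<not> ?thesis"
        then have "{w1, w2} \<in> E" "{w2, w3} \<in> E" "{w1, w3} \<in> E"
          using w1 w2 w3 w12 w13 by blast+
        then have "has_cycle E" unfolding has_cycle_def
          by (rule_tac x="[w1, w2, w3]" in exI) (use w12 w13 in \<open>auto simp: walk_es insert_commute\<close>)
        then show False using T unfolding is_tree_def by blast
      qed
      then obtain u v where uv: "u \<noteq> v" "u \<in> V" "v \<in> V" "{u, v} \<notin> E"
        "\<exists>a b. a \<noteq> b \<and> {u, a} \<in> E \<and> {u, b} \<in> E" "\<exists>a b. a \<noteq> b \<and> {v, a} \<in> E \<and> {v, b} \<in> E"
        by blast
      obtain Q where Q: "distinct Q" "Q \<noteq> []" "es Q \<subseteq> E" "hd Q \<in> V" "last Q \<in> V" "length Q \<ge> 5"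
        using far[OF T uv(1-3) uv(5,6)] uv(4) by blast
      then show ?thesis using diam_ge[OF T Q(1-5)] n3 by simp
    qed
  qed
qed



lemma cyc_nbrs:
  assumes L: "length xs \<ge> 3" "distinct xs" "is_walk E xs" "{last xs, hd xs} \<in> E" and i: "i < length xs"
  shows "\<exists>p q. p \<noteq> q \<and> {xs ! i, p} \<in> E \<and> {xs ! i, q} \<in> E \<and> p \<in> set xs \<and> q \<in> set xs"
proof -
  have st: "\<And>j. Suc j < length xs \<Longrightarrow> {xs ! j, xs ! Suc j} \<in> E" using L unfolding is_walk_def by blast
  have lh: "{xs ! (length xs - 1), xs ! 0} \<in> E" using L
    by (metis hd_conv_nth last_conv_nth list.size(3) not_numeral_le_zero)
  have dj: "\<And>j k. j < length xs \<Longrightarrow> k < length xs \<Longrightarrow> j \<noteq> k \<Longrightarrow> xs ! j \<noteq> xs ! k"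
    using L(2) nth_eq_iff_index_eq by blast
  consider "i = 0" | "0 < i \<and> i < length xs - 1" | "i = length xs - 1" using i by linarith
  then show ?thesis
  proof cases
    case 1
    have "{xs ! i, xs ! 1} \<in> E" using st[of 0] 1 L by simp
    moreover have "{xs ! i, xs ! (length xs - 1)} \<in> E" using lh 1 by (simp add: insert_commute)
    moreover have "xs ! 1 \<noteq> xs ! (length xs - 1)" using dj[of 1 "length xs - 1"] L by simp
    moreover have "xs ! 1 \<in> set xs" by (rule nth_mem) (use L in arith)
    moreover have "xs ! (length xs - 1) \<in> set xs" by (rule nth_mem) (use L in arith)
    ultimately show ?thesis by blast
  next
    case 2
    have si: "Suc (i - 1) = i" using 2 by simp
    have "{xs ! i, xs ! (i - 1)} \<in> E" using st[of "i - 1"] 2 si by (simp add: insert_commute)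
    moreover have "{xs ! i, xs ! Suc i} \<in> E" using st[of i] 2 by linarith
    moreover have "i - 1 < length xs" "Suc i < length xs" "i - 1 \<noteq> Suc i" using 2 by arith+
    then have "xs ! (i - 1) \<noteq> xs ! Suc i" using dj by blast
    moreover have "xs ! (i - 1) \<in> set xs" by (rule nth_mem) (use 2 in arith)
    moreover have "xs ! Suc i \<in> set xs" by (rule nth_mem) (use 2 in arith)
    ultimately show ?thesis by blast
  next
    case 3
    have si: "Suc (i - 1) = i" using 3 L by simp
    have "{xs ! i, xs ! (i - 1)} \<in> E" using st[of "i - 1"] 3 L si by (simp add: insert_commute)
    moreover have "{xs ! i, xs ! 0} \<in> E" using lh 3 by simp
    moreover have "xs ! (i - 1) \<noteq> xs ! 0" using dj[of "i - 1" 0] 3 L by force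
    moreover have "xs ! (i - 1) \<in> set xs" by (rule nth_mem) (use 3 L in arith)
    moreover have "xs ! 0 \<in> set xs" by (rule nth_mem) (use 3 L in arith)
    ultimately show ?thesis by blast
  qed
qed

locale ptree =
  fixes V :: "nat set" and r :: nat and par :: "nat \<Rightarrow> nat" and dep :: "nat \<Rightarrow> nat" and E :: "nat set set"
  assumes fin: "finite V" and rV: "r \<in> V"
    and parV: "\<And>u. u \<in> V \<Longrightarrow> u \<noteq> r \<Longrightarrow> par u \<in> V"
    and pdep: "\<And>u. u \<in> V \<Longrightarrow> u \<noteq> r \<Longrightarrow> dep (par u) < dep u"
    and Edef: "E = (\<lambda>u. {u, par u}) ` (V - {r})"
begin

lemma edgeE: "e \<in> E \<Longrightarrow> \<exists>u. u \<in> V \<and> u \<noteq> r \<and> e = {u, par u}"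
  using Edef by auto

lemma sg: "simple_graph V E"
  unfolding simple_graph_def using fin Edef parV pdep by fastforce

lemma nc: "\<not> has_cycle E"
proof
  assume "has_cycle E"
  then obtain xs where L: "length xs \<ge> 3" "distinct xs" "is_walk E xs" "{last xs, hd xs} \<in> E"
    unfolding has_cycle_def by blast
  have ne: "set xs \<noteq> {}" using L by auto
  have "Max (dep ` set xs) \<in> dep ` set xs" using Max_in[of "dep ` set xs"] ne by simp
  then obtain m where m: "m \<in> set xs" "dep m = Max (dep ` set xs)" by force
  have mx: "\<And>y. y \<in> set xs \<Longrightarrow> dep y \<le> dep m" using m by simp
  obtain i where i: "i < length xs" "xs ! i = m" using m by (metis in_set_conv_nth)
  have wset: "\<And>a b. {a, b} \<in> E \<Longrightarrow> a \<in> set xs \<Longrightarrow> b = par a \<or> (a = par b \<and> dep a < dep b \<and> b \<in> V)"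
  proof -
    fix a b assume ab: "{a, b} \<in> E" "a \<in> set xs"
    then obtain u where u: "u \<in> V" "u \<noteq> r" "{a, b} = {u, par u}" using edgeE by blast
    then show "b = par a \<or> (a = par b \<and> dep a < dep b \<and> b \<in> V)"
      using pdep[OF u(1,2)] by (auto simp: doubleton_eq_iff)
  qed
  obtain p q where pq: "p \<noteq> q" "{m, p} \<in> E" "{m, q} \<in> E" "p \<in> set xs" "q \<in> set xs"
    using cyc_nbrs[OF L i(1)] i by blast
  have "p = par m" using wset[OF pq(2) m(1)] mx[OF pq(4)] by linarith
  moreover have "q = par m" using wset[OF pq(3) m(1)] mx[OF pq(5)] by linarith
  ultimately show False using pq(1) by simp
qed

lemma walk_root: "u \<in> V \<Longrightarrow> \<exists>xs. is_walk E xs \<and> hd xs = u \<and> last xs = r"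
proof (induction "dep u" arbitrary: u rule: less_induct)
  case less
  show ?case
  proof (cases "u = r")
    case True then show ?thesis by (rule_tac x="[r]" in exI) (simp add: is_walk_def)
  next
    case False
    then obtain W where W: "is_walk E W" "hd W = par u" "last W = r"
      using less(1)[of "par u"] pdep[OF less(2)] parV[OF less(2)] by blast
    obtain W' where W': "W = par u # W'" using W by (cases W) (auto simp: is_walk_def)
    have "{u, par u} \<in> E" using Edef less(2) False by blast
    then have "is_walk E (u # W)" using W W' walk_es by simp
    then show ?thesis using W W' by (rule_tac x="u # W" in exI) simp
  qed
qed

lemma conn: "connected_graph V E"
  unfolding connected_graph_def
proof (intro ballI)
  fix u v assume uv: "u \<in> V" "v \<in> V"
  obtain Wu where Wu: "is_walk E Wu" "hd Wu = u" "last Wu = r" using walk_root uv by blast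
  obtain Wv where Wv: "is_walk E Wv" "hd Wv = v" "last Wv = r" using walk_root uv by blast
  have ne: "Wu \<noteq> []" "rev Wv \<noteq> []" using Wu Wv walk_es by auto
  have l: "last Wu = hd (rev Wv)" using Wu Wv ne by (simp add: hd_rev)
  have "is_walk E (Wu @ tl (rev Wv))"
    using es_join[OF ne l] Wu Wv walk_es es_rev ne by auto
  moreover have "hd (Wu @ tl (rev Wv)) = u" using ne Wu by simp
  moreover have "last (Wu @ tl (rev Wv)) = v" using join_last[OF ne l] Wv ne by (simp add: last_rev)
  ultimately show "\<exists>xs. is_walk E xs \<and> hd xs = u \<and> last xs = v" by blast
qed

lemma tree: "is_tree V E"
  unfolding is_tree_def using sg nc conn rV by blast

lemma gdist_root: "u \<in> V \<Longrightarrow> gdist E u r \<le> dep u"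
proof (induction "dep u" arbitrary: u rule: less_induct)
  case less
  show ?case
  proof (cases "u = r")
    case True then show ?thesis by (simp add: gdist_refl)
  next
    case False
    have pu: "par u \<in> V" "dep (par u) < dep u" using pdep[OF less(2) False] parV[OF less(2) False] by auto
    have e: "{u, par u} \<in> E" using Edef less(2) False by blast
    have w1: "\<exists>xs. is_walk E xs \<and> hd xs = u \<and> last xs = par u"
      using e by (rule_tac x="[u, par u]" in exI) (simp add: walk_es)
    have "gdist E u r \<le> gdist E u (par u) + gdist E (par u) r"
      using gdist_tri[OF w1 walk_root[OF pu(1)]] .
    moreover have "gdist E u (par u) \<le> 1" using gdist_edge[OF e] .
    moreover have "gdist E (par u) r \<le> dep (par u)" using less(1)[OF pu(2) pu(1)] .
    ultimately show ?thesis using pu(2) by linarith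
  qed
qed

lemma gdist_bound: "u \<in> V \<Longrightarrow> v \<in> V \<Longrightarrow> gdist E u v \<le> dep u + dep v"
proof -
  assume uv: "u \<in> V" "v \<in> V"
  have "gdist E u v \<le> gdist E u r + gdist E r v"
    using gdist_tri[OF walk_root[OF uv(1)]] conn uv rV unfolding connected_graph_def by blast
  moreover have "gdist E r v \<le> gdist E v r" using gdist_sym_le walk_root uv by blast
  moreover have "gdist E u r \<le> dep u" "gdist E v r \<le> dep v" using gdist_root uv by auto
  ultimately show ?thesis by linarith
qed

lemma walk_any: "u \<in> V \<Longrightarrow> v \<in> V \<Longrightarrow> \<exists>xs. is_walk E xs \<and> hd xs = u \<and> last xs = v"
  using conn unfolding connected_graph_def by blast

lemma ginj: "inj_on (\<lambda>u. {u, par u}) (V - {r})"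
proof (rule inj_onI)
  fix u w assume uw: "u \<in> V - {r}" "w \<in> V - {r}" "{u, par u} = {w, par w}"
  show "u = w"
  proof (rule ccontr)
    assume "u \<noteq> w"
    then have "u = par w" "w = par u" using uw(3) by (auto simp: doubleton_eq_iff)
    moreover have "dep (par u) < dep u" "dep (par w) < dep w" using pdep uw(1,2) by auto
    ultimately show False by simp
  qed
qed

lemma sdeg_formula:
  "sdeg E s v = (\<Sum>u\<in>{u\<in>V - {r}. u = v \<or> par u = v}. if s {u, par u} then 1 else -1)"
proof -
  define A where "A = {u\<in>V - {r}. u = v \<or> par u = v}"
  define g where "g = (\<lambda>u. {u, par u})"
  have finA: "finite A" unfolding A_def using fin by simp
  have injA: "inj_on g A" using ginj unfolding A_def g_def by (rule inj_on_subset) auto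
  have p: "{e\<in>E. v \<in> e \<and> s e} = g ` {u\<in>A. s (g u)}" unfolding A_def g_def Edef by auto
  have n: "{e\<in>E. v \<in> e \<and> \<not> s e} = g ` {u\<in>A. \<not> s (g u)}" unfolding A_def g_def Edef by auto
  have cp: "card {e\<in>E. v \<in> e \<and> s e} = card {u\<in>A. s (g u)}"
    unfolding p by (rule card_image) (rule inj_on_subset[OF injA], auto)
  have cn: "card {e\<in>E. v \<in> e \<and> \<not> s e} = card {u\<in>A. \<not> s (g u)}"
    unfolding n by (rule card_image) (rule inj_on_subset[OF injA], auto)
  have "(\<Sum>u\<in>A. if s (g u) then (1::int) else -1) = (\<Sum>u\<in>{u\<in>A. s (g u)}. 1) + (\<Sum>u\<in>{u\<in>A. \<not> s (g u)}. -1)"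
    using sum.If_cases[OF finA, of "\<lambda>u. s (g u)" "\<lambda>_. (1::int)" "\<lambda>_. -1"]
    by (simp add: Collect_conj_eq Int_commute Collect_neg_eq)
  also have "\<dots> = int (card {u\<in>A. s (g u)}) - int (card {u\<in>A. \<not> s (g u)})" by simp
  finally show ?thesis unfolding sdeg_def cp cn A_def g_def by simp
qed

end



definition parp :: "nat \<times> nat \<Rightarrow> nat \<times> nat" where
  "parp p = (if snd p = 0 then (0, 0) else (fst p, 0))"
definition depp :: "nat \<times> nat \<Rightarrow> nat" where
  "depp p = (if p = (0, 0) then 0 else if fst p = 0 \<or> snd p = 0 then 1 else 2)"
definition pr :: "nat \<Rightarrow> nat" where "pr u = prod_encode (parp (prod_decode u))"
definition dp :: "nat \<Rightarrow> nat" where "dp u = depp (prod_decode u)"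
definition VV :: "(nat \<times> nat) set \<Rightarrow> nat set" where "VV S = prod_encode ` S"
definition EE :: "(nat \<times> nat) set \<Rightarrow> nat set set" where
  "EE S = (\<lambda>u. {u, pr u}) ` (VV S - {prod_encode (0, 0)})"

abbreviation "enc \<equiv> prod_encode"

lemma pr_enc[simp]: "pr (enc p) = enc (parp p)" unfolding pr_def by simp
lemma dp_enc[simp]: "dp (enc p) = depp p" unfolding dp_def by simp

lemma ptree_pairs:
  assumes "finite S" "(0, 0) \<in> S" "\<And>p. p \<in> S \<Longrightarrow> parp p \<in> S"
  shows "ptree (VV S) (enc (0, 0)) pr dp (EE S)"
proof
  show "finite (VV S)" using assms unfolding VV_def by simp
  show "enc (0, 0) \<in> VV S" using assms unfolding VV_def by simp
  fix u assume u: "u \<in> VV S" "u \<noteq> enc (0, 0)"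
  then obtain p where p: "p \<in> S" "u = enc p" "p \<noteq> (0, 0)" unfolding VV_def by auto
  show "pr u \<in> VV S" using p assms unfolding VV_def by simp
  show "dp (pr u) < dp u" using p by (cases p) (auto simp: parp_def depp_def)
qed (simp add: EE_def)

lemma sdeg_pairs:
  assumes "finite S" "(0, 0) \<in> S" "\<And>p. p \<in> S \<Longrightarrow> parp p \<in> S"
  shows "sdeg (EE S) s (enc q) = (\<Sum>p\<in>{p\<in>S - {(0,0)}. p = q \<or> parp p = q}. if s {enc p, enc (parp p)} then 1 else -1)"
proof -
  interpret ptree "VV S" "enc (0, 0)" pr dp "EE S" using ptree_pairs[OF assms] .
  have "sdeg (EE S) s (enc q) = (\<Sum>u\<in>{u\<in>VV S - {enc (0,0)}. u = enc q \<or> pr u = enc q}. if s {u, pr u} then 1 else -1)"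
    by (rule sdeg_formula)
  also have "{u\<in>VV S - {enc (0,0)}. u = enc q \<or> pr u = enc q} = enc ` {p\<in>S - {(0,0)}. p = q \<or> parp p = q}"
    unfolding VV_def by auto
  also have "(\<Sum>u\<in>enc ` {p\<in>S - {(0,0)}. p = q \<or> parp p = q}. if s {u, pr u} then (1::int) else -1)
      = (\<Sum>p\<in>{p\<in>S - {(0,0)}. p = q \<or> parp p = q}. if s {enc p, enc (parp p)} then 1 else -1)"
    by (subst sum.reindex) (auto simp: inj_on_def)
  finally show ?thesis .
qed

lemma leafset:
  assumes "q \<in> S" "snd q \<noteq> 0"
  shows "{p\<in>S - {(0,0)}. p = q \<or> parp p = q} = {q}"
  using assms unfolding parp_def by (cases q) auto

lemma sum_true: "(\<Sum>p\<in>A. if True then (1::int) else -1) = int (card A)" by simp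

definition S1 :: "nat \<Rightarrow> (nat \<times> nat) set" where "S1 m = {0} \<times> {0..m}"

lemma S1_ok: "finite (S1 m)" "(0, 0) \<in> S1 m" "\<And>p. p \<in> S1 m \<Longrightarrow> parp p \<in> S1 m"
  unfolding S1_def parp_def by auto

lemma constr1:
  assumes m: "m \<ge> 2"
  shows "is_tree (VV (S1 m)) (EE (S1 m)) \<and> realizes (VV (S1 m)) (EE (S1 m)) (\<lambda>_. True) {1, int m}
         \<and> tree_diam (VV (S1 m)) (EE (S1 m)) \<le> 2"
proof -
  interpret ptree "VV (S1 m)" "enc (0, 0)" pr dp "EE (S1 m)" using ptree_pairs[OF S1_ok] .
  have sd: "\<And>q. sdeg (EE (S1 m)) (\<lambda>_. True) (enc q) = int (card {p\<in>S1 m - {(0,0)}. p = q \<or> parp p = q})"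
    using sdeg_pairs[OF S1_ok] by simp
  have c0: "{p\<in>S1 m - {(0,0)}. p = (0,0) \<or> parp p = (0,0)} = {0} \<times> {1..m}"
    unfolding S1_def parp_def by auto
  have s0: "sdeg (EE (S1 m)) (\<lambda>_. True) (enc (0,0)) = int m" using sd c0 by simp
  have sl: "\<And>q. q \<in> S1 m \<Longrightarrow> q \<noteq> (0,0) \<Longrightarrow> sdeg (EE (S1 m)) (\<lambda>_. True) (enc q) = 1"
  proof -
    fix q assume q: "q \<in> S1 m" "q \<noteq> (0,0)"
    then have "snd q \<noteq> 0" unfolding S1_def by auto
    then show "sdeg (EE (S1 m)) (\<lambda>_. True) (enc q) = 1" using sd leafset[OF q(1)] by simp
  qed
  have "realizes (VV (S1 m)) (EE (S1 m)) (\<lambda>_. True) {1, int m}"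
    unfolding realizes_def
  proof
    show "{1, int m} \<subseteq> sdeg (EE (S1 m)) (\<lambda>_. True) ` VV (S1 m)"
    proof -
      have "(0,1) \<in> S1 m" "(0,0) \<in> S1 m" using m unfolding S1_def by auto
      then have "enc (0,1) \<in> VV (S1 m)" "enc (0,0) \<in> VV (S1 m)" unfolding VV_def by auto
      then have "sdeg (EE (S1 m)) (\<lambda>_. True) (enc (0,1)) \<in> sdeg (EE (S1 m)) (\<lambda>_. True) ` VV (S1 m)"
        "sdeg (EE (S1 m)) (\<lambda>_. True) (enc (0,0)) \<in> sdeg (EE (S1 m)) (\<lambda>_. True) ` VV (S1 m)" by auto
      then show ?thesis using s0 sl[of "(0,1)"] \<open>(0,1) \<in> S1 m\<close> by simp
    qed
    show "sdeg (EE (S1 m)) (\<lambda>_. True) ` VV (S1 m) \<subseteq> {1, int m}"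
      unfolding VV_def using s0 sl by auto
  qed
  moreover have "tree_diam (VV (S1 m)) (EE (S1 m)) \<le> 2"
    unfolding tree_diam_def
  proof (rule Max.boundedI)
    show "finite {gdist (EE (S1 m)) u v |u v. u \<in> VV (S1 m) \<and> v \<in> VV (S1 m)}"
    proof -
      have "{gdist (EE (S1 m)) u v |u v. u \<in> VV (S1 m) \<and> v \<in> VV (S1 m)} = (\<lambda>(u,v). gdist (EE (S1 m)) u v) ` (VV (S1 m) \<times> VV (S1 m))" by auto
      then show ?thesis using fin by simp
    qed
    show "{gdist (EE (S1 m)) u v |u v. u \<in> VV (S1 m) \<and> v \<in> VV (S1 m)} \<noteq> {}" using rV by blast
    fix d assume "d \<in> {gdist (EE (S1 m)) u v |u v. u \<in> VV (S1 m) \<and> v \<in> VV (S1 m)}"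
    then obtain u v where uv: "d = gdist (EE (S1 m)) u v" "u \<in> VV (S1 m)" "v \<in> VV (S1 m)" by blast
    have "dp u \<le> 1" "dp v \<le> 1" using uv by (auto simp: VV_def S1_def depp_def)
    then show "d \<le> 2" using gdist_bound[OF uv(2,3)] uv(1) by linarith
  qed
  ultimately show ?thesis using tree by blast
qed

lemma diam_le_gen:
  assumes "finite V" "V \<noteq> {}" "\<And>u v. u \<in> V \<Longrightarrow> v \<in> V \<Longrightarrow> gdist E u v \<le> d"
  shows "tree_diam V E \<le> d"
  unfolding tree_diam_def
proof (rule Max.boundedI)
  have "{gdist E u v |u v. u \<in> V \<and> v \<in> V} = (\<lambda>(u,v). gdist E u v) ` (V \<times> V)" by auto
  then show "finite {gdist E u v |u v. u \<in> V \<and> v \<in> V}" using assms by simp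
  show "{gdist E u v |u v. u \<in> V \<and> v \<in> V} \<noteq> {}" using assms by blast
  fix k assume "k \<in> {gdist E u v |u v. u \<in> V \<and> v \<in> V}"
  then show "k \<le> d" using assms by blast
qed

definition S2 :: "nat \<Rightarrow> nat \<Rightarrow> (nat \<times> nat) set" where "S2 a b = {0} \<times> {0..a} \<union> {1} \<times> {0..b}"

lemma S2_ok: "finite (S2 a b)" "(0, 0) \<in> S2 a b" "\<And>p. p \<in> S2 a b \<Longrightarrow> parp p \<in> S2 a b"
  unfolding S2_def parp_def by auto

lemma constr2:
  assumes a: "a \<ge> 1" and b: "b \<ge> 1"
  shows "is_tree (VV (S2 a b)) (EE (S2 a b)) \<and> realizes (VV (S2 a b)) (EE (S2 a b)) (\<lambda>_. True) {1, int a + 1, int b + 1}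
         \<and> tree_diam (VV (S2 a b)) (EE (S2 a b)) \<le> 3"
proof -
  let ?S = "S2 a b" let ?s = "\<lambda>_::nat set. True"
  interpret ptree "VV ?S" "enc (0, 0)" pr dp "EE ?S" using ptree_pairs[OF S2_ok] .
  have sd: "\<And>q. sdeg (EE ?S) ?s (enc q) = int (card {p\<in>?S - {(0,0)}. p = q \<or> parp p = q})"
    using sdeg_pairs[OF S2_ok] by simp
  have c0: "{p\<in>?S - {(0,0)}. p = (0,0) \<or> parp p = (0,0)} = insert (1,0) ({0} \<times> {1..a})"
    unfolding S2_def parp_def by auto
  have s0: "sdeg (EE ?S) ?s (enc (0,0)) = int a + 1" using sd c0 by simp
  have c1: "{p\<in>?S - {(0,0)}. p = (1,0) \<or> parp p = (1,0)} = {1} \<times> {0..b}"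
    unfolding S2_def parp_def by auto
  have s1: "sdeg (EE ?S) ?s (enc (1,0)) = int b + 1" using sd c1 by simp
  have sl: "\<And>q. q \<in> ?S \<Longrightarrow> snd q \<noteq> 0 \<Longrightarrow> sdeg (EE ?S) ?s (enc q) = 1"
    using sd leafset by simp
  have cls: "\<And>q. q \<in> ?S \<Longrightarrow> q = (0,0) \<or> q = (1,0) \<or> snd q \<noteq> 0" unfolding S2_def by auto
  have "realizes (VV ?S) (EE ?S) ?s {1, int a + 1, int b + 1}"
    unfolding realizes_def
  proof
    have "(0,1) \<in> ?S" "(0,0) \<in> ?S" "(1,0) \<in> ?S" using a unfolding S2_def by auto
    then have "enc (0,1) \<in> VV ?S" "enc (0,0) \<in> VV ?S" "enc (1,0) \<in> VV ?S" unfolding VV_def by auto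
    then have "sdeg (EE ?S) ?s (enc (0,1)) \<in> sdeg (EE ?S) ?s ` VV ?S"
      "sdeg (EE ?S) ?s (enc (0,0)) \<in> sdeg (EE ?S) ?s ` VV ?S"
      "sdeg (EE ?S) ?s (enc (1,0)) \<in> sdeg (EE ?S) ?s ` VV ?S" by auto
    then show "{1, int a + 1, int b + 1} \<subseteq> sdeg (EE ?S) ?s ` VV ?S"
      using s0 s1 sl[of "(0,1)"] \<open>(0,1) \<in> ?S\<close> by simp
    show "sdeg (EE ?S) ?s ` VV ?S \<subseteq> {1, int a + 1, int b + 1}"
    proof
      fix d assume "d \<in> sdeg (EE ?S) ?s ` VV ?S"
      then obtain q where q: "q \<in> ?S" "d = sdeg (EE ?S) ?s (enc q)" unfolding VV_def by auto
      then show "d \<in> {1, int a + 1, int b + 1}" using cls[OF q(1)] s0 s1 sl[OF q(1)] by auto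
    qed
  qed
  moreover have "tree_diam (VV ?S) (EE ?S) \<le> 3"
  proof (rule diam_le_gen[OF fin])
    show "VV ?S \<noteq> {}" using rV by blast
    fix u v assume uv: "u \<in> VV ?S" "v \<in> VV ?S"
    show "gdist (EE ?S) u v \<le> 3"
    proof (cases "dp u = 2 \<and> dp v = 2")
      case False
      have "dp u \<le> 2" "dp v \<le> 2" using uv by (auto simp: VV_def depp_def)
      then show ?thesis using gdist_bound[OF uv] False by linarith
    next
      case True
      obtain p q where pq: "p \<in> ?S" "u = enc p" "q \<in> ?S" "v = enc q" using uv unfolding VV_def by auto
      have dd: "depp p = 2" "depp q = 2" using pq True by simp_all
      have p1: "fst p = 1" "snd p \<noteq> 0" "fst q = 1" "snd q \<noteq> 0"
        using pq(1,3) dd unfolding S2_def depp_def by (auto split: if_splits)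
      have b0: "enc (1,0) \<in> VV ?S" unfolding VV_def S2_def by auto
      have eu: "{u, enc (1,0)} \<in> EE ?S"
        unfolding EE_def using pq p1 by (auto simp: VV_def parp_def intro!: image_eqI[of _ _ u])
      have ev: "{v, enc (1,0)} \<in> EE ?S"
        unfolding EE_def using pq p1 by (auto simp: VV_def parp_def intro!: image_eqI[of _ _ v])
      have "gdist (EE ?S) u v \<le> gdist (EE ?S) u (enc (1,0)) + gdist (EE ?S) (enc (1,0)) v"
        using gdist_tri walk_any uv b0 by blast
      moreover have "gdist (EE ?S) u (enc (1,0)) \<le> 1" using gdist_edge[OF eu] .
      moreover have "gdist (EE ?S) (enc (1,0)) v \<le> gdist (EE ?S) v (enc (1,0))"
        using gdist_sym_le walk_any uv b0 by blast
      moreover have "gdist (EE ?S) v (enc (1,0)) \<le> 1" using gdist_edge[OF ev] .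
      ultimately show ?thesis by linarith
    qed
  qed
  ultimately show ?thesis using tree by blast
qed

definition S3 :: "nat \<Rightarrow> (nat \<Rightarrow> nat) \<Rightarrow> (nat \<times> nat) set" where
  "S3 n k = {0} \<times> {0..n+1} \<union> Sigma {1..n} (\<lambda>i. {0..k i})"
definition s3 :: "nat set \<Rightarrow> bool" where
  "s3 e = (\<not> (\<exists>i. 1 \<le> i \<and> e = {enc (0,0), enc (i,0)}))"

lemma S3_ok: "finite (S3 n k)" "(0, 0) \<in> S3 n k" "\<And>p. p \<in> S3 n k \<Longrightarrow> parp p \<in> S3 n k"
  unfolding S3_def parp_def by auto

lemma s3_sign: "p \<noteq> (0,0) \<Longrightarrow> (if s3 {enc p, enc (parp p)} then (1::int) else -1) = (if snd p = 0 then -1 else 1)"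
proof -
  assume p: "p \<noteq> (0,0)"
  obtain a b where ab: "p = (a, b)" by (cases p)
  show ?thesis
  proof (cases "b = 0")
    case True
    then have "a \<ge> 1" using p ab by simp
    then have "\<not> s3 {enc p, enc (parp p)}" unfolding s3_def parp_def using ab True by (auto simp: insert_commute)
    then show ?thesis using True ab by simp
  next
    case False
    have "s3 {enc p, enc (parp p)}" unfolding s3_def parp_def using ab False by (auto simp: doubleton_eq_iff)
    then show ?thesis using False ab by simp
  qed
qed

lemma constr3:
  assumes n: "n \<ge> 2"
  shows "is_tree (VV (S3 n k)) (EE (S3 n k)) \<and>
    realizes (VV (S3 n k)) (EE (S3 n k)) s3 (insert 1 ((\<lambda>i. int (k i) - 1) ` {1..n}))
         \<and> tree_diam (VV (S3 n k)) (EE (S3 n k)) \<le> 4"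
proof -
  let ?S = "S3 n k"
  interpret ptree "VV ?S" "enc (0, 0)" pr dp "EE ?S" using ptree_pairs[OF S3_ok] .
  have sd: "\<And>q. sdeg (EE ?S) s3 (enc q) = (\<Sum>p\<in>{p\<in>?S - {(0,0)}. p = q \<or> parp p = q}. if snd p = 0 then -1 else 1)"
    using sdeg_pairs[OF S3_ok, where s=s3] s3_sign by (auto intro!: sum.cong)
  have c0: "{p\<in>?S - {(0,0)}. p = (0,0) \<or> parp p = (0,0)} = {0} \<times> {1..n+1} \<union> {1..n} \<times> {0}"
    unfolding S3_def parp_def by auto
  have dj0: "{0::nat} \<times> {1..n+1} \<inter> {1..n} \<times> {0::nat} = {}" by auto
  have "(\<Sum>p\<in>{0::nat} \<times> {1..n+1} \<union> {1..n} \<times> {0::nat}. if snd p = 0 then -1 else (1::int))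
      = (\<Sum>p\<in>{0::nat} \<times> {1..n+1}. if snd p = 0 then -1 else 1) + (\<Sum>p\<in>{1..n} \<times> {0::nat}. if snd p = 0 then -1 else 1)"
    by (rule sum.union_disjoint) (use dj0 in auto)
  also have "(\<Sum>p\<in>{0::nat} \<times> {1..n+1}. if snd p = 0 then -1 else (1::int)) = (\<Sum>p\<in>{0::nat} \<times> {1..n+1}. 1)"
    by (rule sum.cong) auto
  also have "(\<Sum>p\<in>{1..n} \<times> {0::nat}. if snd p = 0 then -1 else (1::int)) = (\<Sum>p\<in>{1..n} \<times> {0::nat}. -1)"
    by (rule sum.cong) auto
  finally have s0: "sdeg (EE ?S) s3 (enc (0,0)) = 1" using sd c0 by (simp add: card_cartesian_product)
  have si: "\<And>i. i \<in> {1..n} \<Longrightarrow> sdeg (EE ?S) s3 (enc (i,0)) = int (k i) - 1"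
  proof -
    fix i assume i: "i \<in> {1..n}"
    have ci: "{p\<in>?S - {(0,0)}. p = (i,0) \<or> parp p = (i,0)} = insert (i,0) ({i} \<times> {1..k i})"
      using i unfolding S3_def parp_def by auto
    have "(\<Sum>p\<in>insert (i,0::nat) ({i} \<times> {1..k i}). if snd p = 0 then -1 else (1::int))
        = -1 + (\<Sum>p\<in>{i} \<times> {1..k i}. if snd p = 0 then -1 else 1)"
      by (subst sum.insert) auto
    also have "(\<Sum>p\<in>{i} \<times> {1..k i}. if snd p = 0 then -1 else (1::int)) = (\<Sum>p\<in>{i} \<times> {1..k i}. 1)"
      by (rule sum.cong) auto
    finally show "sdeg (EE ?S) s3 (enc (i,0)) = int (k i) - 1" using sd ci by (simp add: card_cartesian_product)
  qed
  have sl: "\<And>q. q \<in> ?S \<Longrightarrow> snd q \<noteq> 0 \<Longrightarrow> sdeg (EE ?S) s3 (enc q) = 1"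
    using sd leafset by simp
  have cls: "\<And>q. q \<in> ?S \<Longrightarrow> q = (0,0) \<or> (\<exists>i\<in>{1..n}. q = (i,0)) \<or> snd q \<noteq> 0" unfolding S3_def by auto
  have "realizes (VV ?S) (EE ?S) s3 (insert 1 ((\<lambda>i. int (k i) - 1) ` {1..n}))"
    unfolding realizes_def
  proof
    show "insert 1 ((\<lambda>i. int (k i) - 1) ` {1..n}) \<subseteq> sdeg (EE ?S) s3 ` VV ?S"
    proof
      fix d assume "d \<in> insert 1 ((\<lambda>i. int (k i) - 1) ` {1..n})"
      then consider "d = 1" | i where "i \<in> {1..n}" "d = int (k i) - 1" by blast
      then show "d \<in> sdeg (EE ?S) s3 ` VV ?S"
      proof cases
        case 1
        have "enc (0,0) \<in> VV ?S" unfolding VV_def S3_def by auto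
        then show ?thesis using s0 1 by (metis image_eqI)
      next
        case 2
        have "enc (i,0) \<in> VV ?S" unfolding VV_def S3_def using 2 by auto
        then show ?thesis using si[OF 2(1)] 2 by (metis image_eqI)
      qed
    qed
    show "sdeg (EE ?S) s3 ` VV ?S \<subseteq> insert 1 ((\<lambda>i. int (k i) - 1) ` {1..n})"
    proof
      fix d assume "d \<in> sdeg (EE ?S) s3 ` VV ?S"
      then obtain q where q: "q \<in> ?S" "d = sdeg (EE ?S) s3 (enc q)" unfolding VV_def by auto
      then show "d \<in> insert 1 ((\<lambda>i. int (k i) - 1) ` {1..n})" using cls[OF q(1)] s0 si sl[OF q(1)] by auto
    qed
  qed
  moreover have "tree_diam (VV ?S) (EE ?S) \<le> 4"
  proof (rule diam_le_gen[OF fin])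
    show "VV ?S \<noteq> {}" using rV by blast
    fix u v assume uv: "u \<in> VV ?S" "v \<in> VV ?S"
    have "dp u \<le> 2" "dp v \<le> 2" using uv by (auto simp: VV_def depp_def)
    then show "gdist (EE ?S) u v \<le> 4" using gdist_bound[OF uv] by linarith
  qed
  ultimately show ?thesis using tree by blast
qed



theorem mainTheorem2:
  fixes n :: nat and x :: "nat \<Rightarrow> int" and D :: "int set"
  assumes "n \<ge> 1"
    and "inj_on x {1..n}"
    and "\<forall>i\<in>{1..n}. x i > 1"
    and "D = insert 1 (x ` {1..n})"
  shows "diamD D = (if n = 1 then 2 else if n = 2 then 3 else 4)"
proof -
  let ?b = "(if n = 1 then 2 else if n = 2 then 3 else 4) :: nat"
  have LB: "\<And>V E s. is_tree V E \<Longrightarrow> realizes V E s D \<Longrightarrow> ?b \<le> tree_diam V E"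
    using lower_bound assms by blast
  have ex: "\<exists>V E s. is_tree V E \<and> realizes V E s D \<and> tree_diam V E \<le> ?b"
  proof (cases "n = 1")
    case True
    have D1: "D = {1, int (nat (x 1))}" using assms True by auto
    have "nat (x 1) \<ge> 2" using assms True by auto
    then have c: "is_tree (VV (S1 (nat (x 1)))) (EE (S1 (nat (x 1)))) \<and> realizes (VV (S1 (nat (x 1)))) (EE (S1 (nat (x 1)))) (\<lambda>_. True) {1, int (nat (x 1))}
         \<and> tree_diam (VV (S1 (nat (x 1)))) (EE (S1 (nat (x 1)))) \<le> 2" by (rule constr1)
    show ?thesis
      apply (rule exI[of _ "VV (S1 (nat (x 1)))"], rule exI[of _ "EE (S1 (nat (x 1)))"], rule exI[of _ "\<lambda>_. True"])
      using c D1 True by simp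
  next
    case False
    show ?thesis
    proof (cases "n = 2")
      case True
      have "{1..n} = {1, 2}" using True by auto
      then have D2: "D = {1, int (nat (x 1) - 1) + 1, int (nat (x 2) - 1) + 1}" using assms True by auto
      have "x 1 > 1" "x 2 > 1" using assms True by auto
      then have "nat (x 1) - 1 \<ge> 1" "nat (x 2) - 1 \<ge> 1" by auto
      then have c: "is_tree (VV (S2 (nat (x 1) - 1) (nat (x 2) - 1))) (EE (S2 (nat (x 1) - 1) (nat (x 2) - 1)))
        \<and> realizes (VV (S2 (nat (x 1) - 1) (nat (x 2) - 1))) (EE (S2 (nat (x 1) - 1) (nat (x 2) - 1))) (\<lambda>_. True) {1, int (nat (x 1) - 1) + 1, int (nat (x 2) - 1) + 1}
         \<and> tree_diam (VV (S2 (nat (x 1) - 1) (nat (x 2) - 1))) (EE (S2 (nat (x 1) - 1) (nat (x 2) - 1))) \<le> 3"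
        by (rule constr2)
      show ?thesis
        apply (rule exI[of _ "VV (S2 (nat (x 1) - 1) (nat (x 2) - 1))"], rule exI[of _ "EE (S2 (nat (x 1) - 1) (nat (x 2) - 1))"], rule exI[of _ "\<lambda>_. True"])
        using c D2 True False by simp
    next
      case False2: False
      define k where "k i = nat (x i) + 1" for i
      have "(\<lambda>i. int (k i) - 1) ` {1..n} = x ` {1..n}"
      proof (rule image_cong)
        fix i assume "i \<in> {1..n}"
        then have "x i > 1" using assms by blast
        then show "int (k i) - 1 = x i" unfolding k_def by simp
      qed simp
      then have D3: "D = insert 1 ((\<lambda>i. int (k i) - 1) ` {1..n})" using assms by simp
      have "n \<ge> 2" using assms False False2 by auto
      then show ?thesis using constr3[of n k] D3 False False2 by auto
    qed
  qed
  then obtain V E s where T: "is_tree V E" "realizes V E s D" "tree_diam V E \<le> ?b" by blast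
  have eq: "tree_diam V E = ?b" using LB[OF T(1,2)] T(3) by linarith
  show ?thesis unfolding diamD_def
  proof (rule Least_equality)
    show "\<exists>V E s. is_tree V E \<and> realizes V E s D \<and> tree_diam V E = ?b" using T eq by blast
    fix d assume "\<exists>V E s. is_tree V E \<and> realizes V E s D \<and> tree_diam V E = d"
    then show "?b \<le> d" using LB by blast
  qed
qed


end
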